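(* Let $n\ge1$, $v>0$, $0\le\rho<\frac12v$, and let $B=(b_{jk})_{j,k=0}^n\in\mathbb{R}^{(n+1)\times(n+1)}$ with $b_{jk}=v-k$ if $j>k$, $b_{kk}=\frac v2-k-\rho$, $b_{jk}=-j$ if $j<k$. Set $\gamma=\sqrt{\frac14v^2-\rho^2}$. Then $$\det B=\Big(\frac v2-\rho\Big)(-i\gamma)^{n-1}\Big\{-i\gamma\,U_n\Big(-\frac{i(2\rho+1)}{2\gamma}\Big)+\Big(\frac v2+\rho\Big)U_{n-1}\Big(-\frac{i(2\rho+1)}{2\gamma}\Big)\Big\}.$$
   Context: $U_m$ denotes the $m$th Chebyshev polynomial of the second kind (evaluated at complex arguments as a polynomial); $i=\sqrt{-1}$. *)

theory Defs
  imports Complex_Main "Jordan_Normal_Form.Determinant"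
begin

fun chebU :: "nat \<Rightarrow> complex \<Rightarrow> complex" where
  "chebU 0 x = 1"
| "chebU (Suc 0) x = 2 * x"
| "chebU (Suc (Suc m)) x = 2 * x * chebU (Suc m) x - chebU m x"

end

theory Submission imports Defs begin

definition F :: "real \<Rightarrow> real \<Rightarrow> nat \<times> nat \<Rightarrow> real" where
  "F v \<rho> = (\<lambda>(j, k). if j > k then v - real k
                        else if j = k then v / 2 - real k - \<rho>
                        else - real j)"

lemma det_rec:
  "det (mat (n+2) (n+2) (F v \<rho>)) = -(2*\<rho>+1) * det (mat (n+1) (n+1) (F v \<rho>))
     + (v/2+\<rho>)*(v/2-\<rho>) * det (mat n n (F v \<rho>))"
proof -
  define A where "A = mat (n+2) (n+2) (F v \<rho>)"
  define A1 where "A1 = addrow (-1) (n+1) n A"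
  define A2 where "A2 = addcol (-1) (n+1) n A1"
  have A: "A \<in> carrier_mat (n+2) (n+2)" unfolding A_def by simp
  have A1: "A1 \<in> carrier_mat (n+2) (n+2)" unfolding A1_def A_def by (simp add: mat_addrow_def)
  have dA2: "det A2 = det A" unfolding A2_def
    using det_addcol[OF _ _ A1, of n "n+1"] det_addrow[OF _ _ A, of n "n+1"] A1_def by simp
  define G where "G = (\<lambda>(i,j). if i = n+1 then (if j < n then 0 else if j = n then v/2+\<rho> else -(2*\<rho>+1))
      else if j = n+1 then (if i < n then 0 else -(v/2-\<rho>)) else F v \<rho> (i,j))"
  have A2G: "A2 = mat (n+2) (n+2) G"
    apply (rule eq_matI)
    unfolding A2_def A1_def A_def G_def F_def mat_addcol_def mat_addrow_def
    by (auto simp: algebra_simps)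
  have "det A2 = (\<Sum>j<n+2. A2 $$ (n+1,j) * cofactor A2 (n+1) j)"
    by (rule laplace_expansion_row) (auto simp: A2G)
  also have "\<dots> = (v/2+\<rho>) * cofactor A2 (n+1) n + (-(2*\<rho>+1)) * cofactor A2 (n+1) (n+1)"
    by (simp add: A2G G_def)
  finally have e1: "det A2 = (v/2+\<rho>) * cofactor A2 (n+1) n + (-(2*\<rho>+1)) * cofactor A2 (n+1) (n+1)" .
  have "mat_delete A2 (n+1) (n+1) = mat (n+1) (n+1) (F v \<rho>)"
    apply (rule eq_matI) unfolding mat_delete_def A2G G_def by auto
  then have c1: "cofactor A2 (n+1) (n+1) = det (mat (n+1) (n+1) (F v \<rho>))"
    unfolding cofactor_def by simp
  define H where "H = (\<lambda>(i,j). if j = n then (if i < n then 0 else -(v/2-\<rho>)) else F v \<rho> (i,j))"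
  have MH: "mat_delete A2 (n+1) n = mat (n+1) (n+1) H"
    apply (rule eq_matI) unfolding mat_delete_def A2G G_def H_def by auto
  have "det (mat (n+1) (n+1) H) = (\<Sum>i<n+1. mat (n+1) (n+1) H $$ (i,n) * cofactor (mat (n+1) (n+1) H) i n)"
    by (rule laplace_expansion_column) auto
  also have "\<dots> = -(v/2-\<rho>) * cofactor (mat (n+1) (n+1) H) n n"
    by (simp add: H_def)
  finally have d1: "det (mat (n+1) (n+1) H) = -(v/2-\<rho>) * cofactor (mat (n+1) (n+1) H) n n" .
  have "mat_delete (mat (n+1) (n+1) H) n n = mat n n (F v \<rho>)"
    apply (rule eq_matI) unfolding mat_delete_def H_def by auto
  then have "det (mat (n+1) (n+1) H) = -(v/2-\<rho>) * det (mat n n (F v \<rho>))"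
    using d1 unfolding cofactor_def by simp
  then have c2: "cofactor A2 (n+1) n = (v/2-\<rho>) * det (mat n n (F v \<rho>))"
    unfolding cofactor_def MH by (simp add: algebra_simps)
  have "det A = (v/2+\<rho>) * ((v/2-\<rho>) * det (mat n n (F v \<rho>))) + (-(2*\<rho>+1)) * det (mat (n+1) (n+1) (F v \<rho>))"
    using e1 c1 c2 dA2 by simp
  then show ?thesis unfolding A_def by (simp add: algebra_simps)
qed

lemma lin:
  fixes E2 :: complex
  shows "E2 = d*E1 + G*E0 \<Longrightarrow> E1 = c*(Q1 + a*M1) \<Longrightarrow> E0 = c*(Q0+a*M0) \<Longrightarrow> Q2 = d*Q1 + G*Q0
   \<Longrightarrow> M2 = d*M1+G*M0 \<Longrightarrow> E2 = c*(Q2 + a*M2)"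
  by (simp add: algebra_simps)

lemma main_ind:
  fixes v \<rho> g :: real and x :: complex
  assumes g: "g \<noteq> 0" and gg: "g^2 = (v/2+\<rho>)*(v/2-\<rho>)"
    and x: "x = - \<i> * complex_of_real (2 * \<rho> + 1) / complex_of_real (2 * g)"
  defines "Q \<equiv> \<lambda>m. (- \<i> * complex_of_real g) ^ m * chebU m x"
  defines "P \<equiv> \<lambda>m. complex_of_real (det (mat (m+1) (m+1) (F v \<rho>))) =
      complex_of_real (v/2-\<rho>) * (Q m + complex_of_real (v/2+\<rho>) * (if m = 0 then 0 else Q (m-1)))"
  shows "P m \<and> P (Suc m)"
proof -
  have Q0: "Q 0 = 1" unfolding Q_def by simp
  have Q1: "Q 1 = - complex_of_real (2*\<rho>+1)" unfolding Q_def x using g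
    by (simp add: field_simps)
  have Qr: "Q (Suc (Suc k)) = - complex_of_real (2*\<rho>+1) * Q (Suc k) + complex_of_real (g^2) * Q k" for k
  proof -
    have "Q (Suc (Suc k)) = (- \<i> * complex_of_real g) * (2*x) * Q (Suc k) - (- \<i> * complex_of_real g)^2 * Q k"
      unfolding Q_def by (simp add: algebra_simps power2_eq_square)
    also have "(- \<i> * complex_of_real g) * (2*x) = - complex_of_real (2*\<rho>+1)"
      unfolding x using g by (simp add: field_simps)
    also have "(- \<i> * complex_of_real g)^2 = - complex_of_real (g^2)"
      by (simp add: power_mult_distrib)
    finally show ?thesis by simp
  qed
  have D0: "det (mat 0 0 (F v \<rho>)) = 1" by (simp add: det_dim_zero)
  have D1: "det (mat 1 1 (F v \<rho>)) = v/2-\<rho>"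
    by (subst det_single) (auto simp: F_def)
  have Dr: "complex_of_real (det (mat (k+2) (k+2) (F v \<rho>))) =
     - complex_of_real (2*\<rho>+1) * complex_of_real (det (mat (k+1) (k+1) (F v \<rho>)))
     + complex_of_real (g^2) * complex_of_real (det (mat k k (F v \<rho>)))" for k
    unfolding det_rec gg by simp
  define Qm where "Qm = (\<lambda>k. if k = 0 then 0 else Q (k-1))"
  have Qmr: "Qm (Suc (Suc k)) = - complex_of_real (2*\<rho>+1) * Qm (Suc k) + complex_of_real (g^2) * Qm k" for k
  proof (cases k)
    case 0 then show ?thesis unfolding Qm_def using Q0 Q1 by simp
  next
    case (Suc j) then show ?thesis unfolding Qm_def using Qr[of j] by simp
  qed
  have P_alt: "P k = (complex_of_real (det (mat (k+1) (k+1) (F v \<rho>))) =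
      complex_of_real (v/2-\<rho>) * (Q k + complex_of_real (v/2+\<rho>) * Qm k))" for k
    unfolding P_def Qm_def by simp
  show ?thesis
  proof (induction m)
    case 0
    have "P 0" unfolding P_def using D1 Q0 by simp
    moreover have "P 1"
    proof -
      have d2: "complex_of_real (det (mat (Suc (Suc 0)) (Suc (Suc 0)) (F v \<rho>))) = - complex_of_real (2*\<rho>+1) * complex_of_real (v/2-\<rho>)
          + complex_of_real (g^2)"
        using Dr[of 0] D1 D0 by (simp add: numeral_2_eq_2)
      have "complex_of_real (v/2-\<rho>) * (Q 1 + complex_of_real (v/2+\<rho>) * Q 0) =
         - complex_of_real (2*\<rho>+1) * complex_of_real (v/2-\<rho>) + complex_of_real (g^2)"
        unfolding Q0 Q1 gg of_real_mult by (simp add: algebra_simps)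
      then show ?thesis unfolding P_def using d2 by simp
    qed
    ultimately show ?case by simp
  next
    case (Suc m)
    then have h1: "P m" and h2: "P (Suc m)" by auto
    have "P (Suc (Suc m))"
      unfolding P_alt
      apply (rule lin[OF _ h2[unfolded P_alt] h1[unfolded P_alt] Qr[of m] Qmr[of m]])
      using Dr[of "Suc m"] by (simp add: numeral_2_eq_2)
    then show ?case using h2 by simp
  qed
qed

theorem lemma5p4:
  fixes n :: nat and v \<rho> :: real
  assumes "n \<ge> 1" and "v > 0" and "0 \<le> \<rho>" and "\<rho> < v / 2"
  defines "B \<equiv> mat (n + 1) (n + 1)
              (\<lambda>(j, k). if j > k then v - real k
                        else if j = k then v / 2 - real k - \<rho>
                        else - real j)"
  defines "\<gamma> \<equiv> sqrt (v\<^sup>2 / 4 - \<rho>\<^sup>2)"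
  defines "x \<equiv> - \<i> * complex_of_real (2 * \<rho> + 1) / complex_of_real (2 * \<gamma>)"
  shows "complex_of_real (det B) =
           complex_of_real (v / 2 - \<rho>) * (- \<i> * complex_of_real \<gamma>) ^ (n - 1) *
           (- \<i> * complex_of_real \<gamma> * chebU n x
            + complex_of_real (v / 2 + \<rho>) * chebU (n - 1) x)"
proof -
  have pos: "v\<^sup>2 / 4 - \<rho>\<^sup>2 > 0"
  proof -
    have "\<rho>^2 < (v/2)^2" using assms(3,4) by (intro power_strict_mono) auto
    then show ?thesis by (simp add: power_divide)
  qed
  have g0: "\<gamma> \<noteq> 0" unfolding \<gamma>_def using pos by simp
  have gg: "\<gamma>^2 = (v/2+\<rho>)*(v/2-\<rho>)" unfolding \<gamma>_def using pos
    by (simp add: algebra_simps power2_eq_square)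
  have BF: "B = mat (n+1) (n+1) (F v \<rho>)" unfolding B_def F_def by simp
  obtain m where nm: "n = Suc m" using assms(1) by (cases n) auto
  have P: "complex_of_real (det B) = complex_of_real (v/2-\<rho>) *
     ((- \<i> * complex_of_real \<gamma>) ^ n * chebU n x + complex_of_real (v/2+\<rho>) *
       ((- \<i> * complex_of_real \<gamma>) ^ (n-1) * chebU (n-1) x))"
    using conjunct1[OF main_ind[OF g0 gg x_def[THEN meta_eq_to_obj_eq], of n]] nm BF by simp
  show ?thesis unfolding P nm by (simp add: field_simps)
qed

end
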